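(* Let $G$ be a graph on $V$, let $W\subseteq V$ be reducible in $G$, and let $W_1,W_2\subseteq V\setminus W$. Then $$\operatorname{rank}_{\Gamma_W(G)}(W_1,W_2)=\operatorname{rank}_G(W\cup W_1,\,W\cup W_2)-\operatorname{rank}_G(W).$$
   Context: A graph means a finite simple graph in which loops are allowed, with adjacency matrix $A$ over $\mathbf F_2$ ($A_{vv}=1$ iff $v$ has a loop). Let $\mathcal V$ be the $\mathbf F_2$-vector space with basis $V$ and $\mathcal E(x,y)=x^TAy$. For $W\subseteq V$, $\langle W\rangle$ is the span of $W$ and $\langle W\rangle^{\perp\mathcal E}=\{x\in\mathcal V:\mathcal E(x,w)=0\ \forall w\in\langle W\rangle\}$. $W$ is reducible in $G$ if $\langle W\rangle+\langle W\rangle^{\perp\mathcal E}=\mathcal V$. For reducible $W$, $\mathcal E^W(x_1,x_2)=\mathcal E(x_1',x_2')$ where $x_i'\in\langle W\rangle^{\perp\mathcal E}$ with $x_i-x_i'\in\langle W\rangle$ (well defined), and the graph reduction $\Gamma_W(G)$ is the graph on $V\setminus W$ in which $v,w$ (possibly equal) are joined iff $\mathcal E^W(v,w)=1$. For a graph $H$ and vertex subsets $W_1,W_2$, $\operatorname{rank}_H(W_1,W_2)$ is the rank over $\mathbf F_2$ of the submatrix of the adjacency matrix of $H$ with rows $W_1$ and columns $W_2$, and $\operatorname{rank}_H(W)=\operatorname{rank}_H(W,W)$. *)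

theory Defs
  imports Main "HOL.Vector_Spaces" "HOL-Library.Z2" "HOL-Library.Function_Algebras"
begin

text \<open>The field F2 is the type bit (HOL-Library.Z2). Vectors of the F2-vector space
  with basis V are functions 'v => bit; scalar multiplication is pointwise.\<close>

definition scaleF2 :: "bit \<Rightarrow> ('v \<Rightarrow> bit) \<Rightarrow> ('v \<Rightarrow> bit)" where
  "scaleF2 c x = (\<lambda>v. c * x v)"

definition delta :: "'v \<Rightarrow> ('v \<Rightarrow> bit)" where
  "delta v = (\<lambda>u. if u = v then 1 else 0)"

text \<open>Span of a vertex set W (as set of basis vectors); vspan V is the space script-V.\<close>
definition vspan :: "'v set \<Rightarrow> ('v \<Rightarrow> bit) set" where
  "vspan W = module.span scaleF2 (delta ` W)"

definition is_graph :: "'v set \<Rightarrow> ('v \<Rightarrow> 'v \<Rightarrow> bool) \<Rightarrow> bool" where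
  "is_graph V A \<longleftrightarrow> finite V \<and> (\<forall>u v. A u v = A v u) \<and> (\<forall>u v. A u v \<longrightarrow> u \<in> V \<and> v \<in> V)"

definition adjmat :: "('v \<Rightarrow> 'v \<Rightarrow> bool) \<Rightarrow> 'v \<Rightarrow> 'v \<Rightarrow> bit" where
  "adjmat A u v = (if A u v then 1 else 0)"

definition formE :: "'v set \<Rightarrow> ('v \<Rightarrow> 'v \<Rightarrow> bool) \<Rightarrow> ('v \<Rightarrow> bit) \<Rightarrow> ('v \<Rightarrow> bit) \<Rightarrow> bit" where
  "formE V A x y = (\<Sum>u\<in>V. \<Sum>v\<in>V. x u * adjmat A u v * y v)"

definition perpE :: "'v set \<Rightarrow> ('v \<Rightarrow> 'v \<Rightarrow> bool) \<Rightarrow> 'v set \<Rightarrow> ('v \<Rightarrow> bit) set" where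
  "perpE V A W = {x \<in> vspan V. \<forall>w \<in> vspan W. formE V A x w = 0}"

definition reducible :: "'v set \<Rightarrow> ('v \<Rightarrow> 'v \<Rightarrow> bool) \<Rightarrow> 'v set \<Rightarrow> bool" where
  "reducible V A W \<longleftrightarrow> {a + b | a b. a \<in> vspan W \<and> b \<in> perpE V A W} = vspan V"

definition perp_rep :: "'v set \<Rightarrow> ('v \<Rightarrow> 'v \<Rightarrow> bool) \<Rightarrow> 'v set \<Rightarrow> ('v \<Rightarrow> bit) \<Rightarrow> ('v \<Rightarrow> bit)" where
  "perp_rep V A W x = (SOME x'. x' \<in> perpE V A W \<and> x - x' \<in> vspan W)"

definition formEW :: "'v set \<Rightarrow> ('v \<Rightarrow> 'v \<Rightarrow> bool) \<Rightarrow> 'v set \<Rightarrow> ('v \<Rightarrow> bit) \<Rightarrow> ('v \<Rightarrow> bit) \<Rightarrow> bit" where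
  "formEW V A W x1 x2 = formE V A (perp_rep V A W x1) (perp_rep V A W x2)"

definition graph_reduction :: "'v set \<Rightarrow> ('v \<Rightarrow> 'v \<Rightarrow> bool) \<Rightarrow> 'v set \<Rightarrow> 'v \<Rightarrow> 'v \<Rightarrow> bool" where
  "graph_reduction V A W v w \<longleftrightarrow>
     v \<in> V - W \<and> w \<in> V - W \<and> formEW V A W (delta v) (delta w) = 1"

text \<open>rank_H(W1,W2): rank over F2 of the submatrix with rows W1 and columns W2 of the
  adjacency matrix of H, i.e. the dimension of its row space.\<close>
definition rankG :: "('v \<Rightarrow> 'v \<Rightarrow> bool) \<Rightarrow> 'v set \<Rightarrow> 'v set \<Rightarrow> nat" where
  "rankG A W1 W2 = vector_space.dim scaleF2
     (module.span scaleF2 {(\<lambda>c. if c \<in> W2 then adjmat A r c else 0) | r. r \<in> W1})"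

end

theory Submission
  imports Defs
begin

declare add_bit_eq_xor[simp del] mult_bit_eq_and[simp del]

lemma vsF2: "vector_space scaleF2"
  by unfold_locales (auto simp: scaleF2_def fun_eq_iff algebra_simps)

interpretation F: vector_space scaleF2 by (rule vsF2)

lemma sum_fun_apply: "(sum f S) x = (\<Sum>s\<in>S. f s x)" for f :: "'a \<Rightarrow> 'b \<Rightarrow> 'c::comm_monoid_add"
  by (induction S rule: infinite_finite_induct) auto

lemma scaleF2_apply[simp]: "scaleF2 c f x = c * f x"
  by (simp add: scaleF2_def)

lemma bit_add_self[simp]: "(a::bit) + a = 0"
  by (cases a) simp_all

lemma vspan_eq: assumes "finite W" shows "vspan W = {f. \<forall>x. x \<notin> W \<longrightarrow> f x = 0}"
proof
  show "vspan W \<subseteq> {f. \<forall>x. x \<notin> W \<longrightarrow> f x = 0}"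
  proof
    fix f assume "f \<in> vspan W"
    then show "f \<in> {f. \<forall>x. x \<notin> W \<longrightarrow> f x = 0}" unfolding vspan_def
      by (induction rule: F.span_induct_alt) (auto simp: delta_def split: if_splits)
  qed
next
  show "{f. \<forall>x. x \<notin> W \<longrightarrow> f x = 0} \<subseteq> vspan W"
  proof
    fix f :: "'a \<Rightarrow> bit" assume f: "f \<in> {f. \<forall>x. x \<notin> W \<longrightarrow> f x = 0}"
    have "f = (\<Sum>w\<in>W. scaleF2 (f w) (delta w))"
    proof
      fix x
      have "(\<Sum>w\<in>W. scaleF2 (f w) (delta w)) x = (\<Sum>w\<in>W. if w = x then f w else 0)"
        unfolding sum_fun_apply by (rule sum.cong) (auto simp: delta_def)
      also have "\<dots> = f x" using f assms by (simp add: sum.delta)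
      finally show "f x = (\<Sum>w\<in>W. scaleF2 (f w) (delta w)) x" by simp
    qed
    also have "\<dots> \<in> vspan W" unfolding vspan_def
      by (intro F.span_sum F.span_scale F.span_base) auto
    finally show "f \<in> vspan W" .
  qed
qed

lemma dim_disj:
  fixes P Q :: "('v \<Rightarrow> bit) set"
  assumes fP: "finite P" and fQ: "finite Q"
    and sP: "\<forall>f\<in>P. \<forall>x. x \<notin> S1 \<longrightarrow> f x = 0" and sQ: "\<forall>f\<in>Q. \<forall>x. x \<notin> S2 \<longrightarrow> f x = 0"
    and d: "S1 \<inter> S2 = {}"
  shows "F.dim (P \<union> Q) = F.dim P + F.dim Q"
proof -
  obtain BP where BP: "BP \<subseteq> P" "F.independent BP" "P \<subseteq> F.span BP" "card BP = F.dim P"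
    using F.basis_exists by blast
  obtain BQ where BQ: "BQ \<subseteq> Q" "F.independent BQ" "Q \<subseteq> F.span BQ" "card BQ = F.dim Q"
    using F.basis_exists by blast
  have fBP: "finite BP" using BP fP finite_subset by blast
  have fBQ: "finite BQ" using BQ fQ finite_subset by blast
  have disj: "BP \<inter> BQ = {}"
  proof (rule ccontr)
    assume "BP \<inter> BQ \<noteq> {}"
    then obtain v where v: "v \<in> BP" "v \<in> BQ" by blast
    have "v = 0"
    proof
      fix x
      have "x \<notin> S1 \<or> x \<notin> S2" using d by blast
      then show "v x = 0 x"
        using v BP BQ sP sQ by auto
    qed
    then show False using v BP F.dependent_zero by blast
  qed
  have ind: "F.independent (BP \<union> BQ)"
  proof
    assume "F.dependent (BP \<union> BQ)"
    then obtain a where a: "\<exists>v\<in>BP \<union> BQ. a v \<noteq> 0" "(\<Sum>v\<in>BP \<union> BQ. scaleF2 (a v) v) = 0"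
      using F.dependent_finite[of "BP \<union> BQ"] fBP fBQ by auto
    define sp where "sp = (\<Sum>v\<in>BP. scaleF2 (a v) v)"
    define sq where "sq = (\<Sum>v\<in>BQ. scaleF2 (a v) v)"
    have spq: "sp + sq = 0" using a(2) disj fBP fBQ unfolding sp_def sq_def
      by (simp add: sum.union_disjoint)
    have spS: "sp x = 0" if "x \<notin> S1" for x
      using that BP sP unfolding sp_def by (auto simp: sum_fun_apply intro!: sum.neutral)
    have sqS: "sq x = 0" if "x \<notin> S2" for x
      using that BQ sQ unfolding sq_def by (auto simp: sum_fun_apply intro!: sum.neutral)
    have sp0: "sp = 0"
    proof
      fix x
      have "sp x + sq x = 0" using spq by (metis plus_fun_apply zero_fun_apply)
      moreover have "x \<notin> S1 \<or> x \<notin> S2" using d by blast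
      ultimately show "sp x = 0 x" using spS sqS by auto
    qed
    have sq0: "sq = 0"
    proof
      fix x
      have "sp x + sq x = 0" using spq by (metis plus_fun_apply zero_fun_apply)
      moreover have "x \<notin> S1 \<or> x \<notin> S2" using d by blast
      ultimately show "sq x = 0 x" using spS sqS by auto
    qed
    have "\<forall>v\<in>BP. a v = 0" using BP(2) F.dependent_finite[OF fBP] sp0 unfolding sp_def by blast
    moreover have "\<forall>v\<in>BQ. a v = 0" using BQ(2) F.dependent_finite[OF fBQ] sq0 unfolding sq_def by blast
    ultimately show False using a(1) by blast
  qed
  have "card (BP \<union> BQ) = F.dim (P \<union> Q)"
    apply (rule F.basis_card_eq_dim)
    using BP BQ ind F.span_mono[of BP "BP \<union> BQ"] F.span_mono[of BQ "BP \<union> BQ"] by auto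
  then show ?thesis using card_Un_disjoint[OF fBP fBQ disj] BP BQ by simp
qed


lemma formE_add_right: "formE V A x (y + z) = formE V A x y + formE V A x z"
  by (simp add: formE_def distrib_left sum.distrib)

lemma formE_delta_right:
  assumes "w \<in> V" "finite V"
  shows "formE V A x (delta w) = (\<Sum>u\<in>V. x u * adjmat A u w)"
  unfolding formE_def
proof (rule sum.cong[OF refl])
  fix u assume "u \<in> V"
  have "(\<Sum>v\<in>V. x u * adjmat A u v * delta w v) = (\<Sum>v\<in>V. if v = w then x u * adjmat A u w else 0)"
    by (rule sum.cong) (auto simp: delta_def)
  also have "\<dots> = x u * adjmat A u w" using assms by (simp add: sum.delta)
  finally show "(\<Sum>v\<in>V. x u * adjmat A u v * delta w v) = x u * adjmat A u w" .
qed

definition row :: "('v \<Rightarrow> 'v \<Rightarrow> bool) \<Rightarrow> 'v set \<Rightarrow> 'v \<Rightarrow> 'v \<Rightarrow> bit" where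
  "row B C r = (\<lambda>c. if c \<in> C then adjmat B r c else 0)"

lemma rankG_row: "rankG B R C = F.dim (row B C ` R)"
proof -
  have "{(\<lambda>c. if c \<in> C then adjmat B r c else 0) | r. r \<in> R} = row B C ` R"
    by (auto simp: row_def)
  then show ?thesis unfolding rankG_def by simp
qed

locale red =
  fixes V :: "'v set" and A :: "'v \<Rightarrow> 'v \<Rightarrow> bool" and W W1 W2 :: "'v set"
  assumes graph: "is_graph V A" and WV: "W \<subseteq> V" and redW: "reducible V A W"
    and W1: "W1 \<subseteq> V - W" and W2: "W2 \<subseteq> V - W"
begin

definition p where "p c = perp_rep V A W (delta c)"
definition u where "u c = p c - delta c"

lemma finV: "finite V" using graph is_graph_def by blast
lemma finW: "finite W" using finV WV finite_subset by blast
lemma sym: "adjmat A x y = adjmat A y x" using graph by (simp add: is_graph_def adjmat_def)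

lemma p_prop: assumes "c \<in> V" shows "p c \<in> perpE V A W \<and> delta c - p c \<in> vspan W"
proof -
  have "delta c \<in> vspan V" unfolding vspan_def using assms by (intro F.span_base) auto
  then have "delta c \<in> {a + b | a b. a \<in> vspan W \<and> b \<in> perpE V A W}"
    using redW by (simp add: reducible_def)
  then obtain a b where ab: "delta c = a + b" "a \<in> vspan W" "b \<in> perpE V A W" by blast
  then have "delta c - b = a" by simp
  then have "\<exists>x'. x' \<in> perpE V A W \<and> delta c - x' \<in> vspan W" using ab by metis
  then show ?thesis unfolding p_def perp_rep_def by (rule someI_ex)
qed

lemma u_span: assumes "c \<in> V" shows "u c \<in> vspan W"
proof -
  have "u c = delta c - p c" unfolding u_def by (simp add: fun_eq_iff add.commute)
  then show ?thesis using p_prop[OF assms] by simp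
qed

lemma u_supp: "c \<in> V \<Longrightarrow> x \<notin> W \<Longrightarrow> u c x = 0"
  using u_span vspan_eq[OF finW] by blast

lemma p_eq: "p c = delta c + u c"
  unfolding u_def by (simp add: fun_eq_iff add.assoc[symmetric])

lemma E_pdelta: assumes "c \<in> V" "w \<in> V"
  shows "formE V A (p c) (delta w) = adjmat A c w + (\<Sum>x\<in>W. u c x * adjmat A x w)"
proof -
  have "formE V A (p c) (delta w) = (\<Sum>x\<in>V. (delta c x + u c x) * adjmat A x w)"
    using formE_delta_right[OF assms(2) finV] by (simp add: p_eq)
  also have "\<dots> = (\<Sum>x\<in>V. (if x = c then adjmat A c w else 0) + u c x * adjmat A x w)"
    by (rule sum.cong) (auto simp: delta_def distrib_right)
  also have "\<dots> = (\<Sum>x\<in>V. if x = c then adjmat A c w else 0) + (\<Sum>x\<in>V. u c x * adjmat A x w)"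
    by (rule sum.distrib)
  also have "(\<Sum>x\<in>V. u c x * adjmat A x w) = (\<Sum>x\<in>W. u c x * adjmat A x w)"
    using assms u_supp WV finV by (intro sum.mono_neutral_right) auto
  finally show ?thesis using assms finV by (simp add: sum.delta)
qed

lemma P: assumes "c \<in> V" "w \<in> W" shows "adjmat A c w + (\<Sum>x\<in>W. u c x * adjmat A x w) = 0"
proof -
  have "delta w \<in> vspan W" unfolding vspan_def using assms by (intro F.span_base) auto
  then have "formE V A (p c) (delta w) = 0" using p_prop[OF assms(1)] by (simp add: perpE_def)
  then show ?thesis using E_pdelta[OF assms(1)] assms WV by auto
qed

lemma G: assumes "r \<in> V" "c \<in> V"
  shows "formEW V A W (delta r) (delta c) = adjmat A r c + (\<Sum>x\<in>W. u r x * adjmat A x c)"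
proof -
  have "formEW V A W (delta r) (delta c) = formE V A (p r) (delta c) + formE V A (p r) (u c)"
    unfolding formEW_def p_def[symmetric] by (simp add: p_eq formE_add_right)
  moreover have "formE V A (p r) (u c) = 0"
    using p_prop[OF assms(1)] u_span[OF assms(2)] by (simp add: perpE_def)
  ultimately show ?thesis using E_pdelta assms by simp
qed


lemma W1V: "W1 \<subseteq> V" and W2V: "W2 \<subseteq> V" and dW1: "W \<inter> W1 = {}" and dW2: "W \<inter> W2 = {}"
  using W1 W2 by auto

abbreviation "\<Gamma> \<equiv> graph_reduction V A W"

lemma adjG: assumes "r \<in> W1" "c \<in> W2"
  shows "adjmat \<Gamma> r c = adjmat A r c + (\<Sum>x\<in>W. u r x * adjmat A x c)"
proof -
  have "adjmat \<Gamma> r c = formEW V A W (delta r) (delta c)"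
    using assms W1 W2 by (cases "formEW V A W (delta r) (delta c)") (auto simp: adjmat_def graph_reduction_def)
  then show ?thesis using G assms W1V W2V by auto
qed

definition g where "g r = row \<Gamma> W2 r"

lemma g_eq: assumes r: "r \<in> W1"
  shows "g r = row A (W \<union> W2) r + (\<Sum>x\<in>W. scaleF2 (u r x) (row A (W \<union> W2) x))"
proof
  fix c
  have rhs: "(row A (W \<union> W2) r + (\<Sum>x\<in>W. scaleF2 (u r x) (row A (W \<union> W2) x))) c
      = row A (W \<union> W2) r c + (\<Sum>x\<in>W. u r x * row A (W \<union> W2) x c)"
    by (simp add: sum_fun_apply)
  show "g r c = (row A (W \<union> W2) r + (\<Sum>x\<in>W. scaleF2 (u r x) (row A (W \<union> W2) x))) c"
  proof (cases "c \<in> W")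
    case True
    then have "c \<notin> W2" using dW2 by blast
    then show ?thesis unfolding rhs using True P[of r c] r W1V
      by (auto simp: g_def row_def)
  next
    case False
    show ?thesis
    proof (cases "c \<in> W2")
      case True
      then show ?thesis unfolding rhs using False adjG[OF r True] by (simp add: g_def row_def)
    next
      case c: False
      then show ?thesis unfolding rhs using False by (simp add: g_def row_def)
    qed
  qed
qed

lemma span_eq1: "F.span (row A (W \<union> W2) ` (W \<union> W1)) = F.span (row A (W \<union> W2) ` W \<union> g ` W1)"
proof -
  let ?C = "W \<union> W2"
  have 1: "row A ?C ` (W \<union> W1) \<subseteq> F.span (row A ?C ` W \<union> g ` W1)"
  proof
    fix y assume "y \<in> row A ?C ` (W \<union> W1)"
    then obtain r where r: "r \<in> W \<union> W1" "y = row A ?C r" by blast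
    show "y \<in> F.span (row A ?C ` W \<union> g ` W1)"
    proof (cases "r \<in> W")
      case True then show ?thesis using r by (intro F.span_base) auto
    next
      case False
      then have r1: "r \<in> W1" using r by blast
      have "y = g r - (\<Sum>x\<in>W. scaleF2 (u r x) (row A ?C x))" unfolding g_eq[OF r1] r(2) by (rule add_diff_cancel[symmetric])
      also have "\<dots> \<in> F.span (row A ?C ` W \<union> g ` W1)"
        using r1 by (intro F.span_diff F.span_sum F.span_scale F.span_base) auto
      finally show ?thesis .
    qed
  qed
  have 2: "row A ?C ` W \<union> g ` W1 \<subseteq> F.span (row A ?C ` (W \<union> W1))"
  proof
    fix y assume "y \<in> row A ?C ` W \<union> g ` W1"
    then consider (a) x where "x \<in> W" "y = row A ?C x" | (b) r where "r \<in> W1" "y = g r" by blast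
    then show "y \<in> F.span (row A ?C ` (W \<union> W1))"
    proof cases
      case a then show ?thesis by (intro F.span_base) auto
    next
      case b
      then have "y = row A ?C r + (\<Sum>x\<in>W. scaleF2 (u r x) (row A ?C x))" using g_eq by metis
      also have "\<dots> \<in> F.span (row A ?C ` (W \<union> W1))"
        using b by (intro F.span_add F.span_sum F.span_scale F.span_base) auto
      finally show ?thesis .
    qed
  qed
  from 1 2 show ?thesis by (simp only: F.span_eq)
qed

definition T :: "('v \<Rightarrow> bit) \<Rightarrow> 'v \<Rightarrow> bit" where
  "T f = (\<lambda>c. if c \<in> W2 then f c + (\<Sum>y\<in>W. f y * u c y) else f c)"

lemma T_T: "T (T f) = f"
proof
  fix c
  have "(\<Sum>y\<in>W. T f y * u c y) = (\<Sum>y\<in>W. f y * u c y)"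
    using dW2 by (intro sum.cong) (auto simp: T_def)
  then show "T (T f) c = f c" by (simp add: T_def add.assoc)
qed

lemma T_add: "T (f + h) = T f + T h"
  by (simp add: T_def fun_eq_iff distrib_right sum.distrib algebra_simps)

lemma T_scale: "T (scaleF2 a f) = scaleF2 a (T f)"
  by (simp add: T_def fun_eq_iff sum_distrib_left distrib_left mult.assoc)

lemma T_zero: "T 0 = 0"
  by (simp add: T_def fun_eq_iff)

lemma T_span: "y \<in> F.span B \<Longrightarrow> T y \<in> F.span (T ` B)"
proof (induction rule: F.span_induct_alt)
  case base show ?case unfolding T_zero by (rule F.span_zero)
next
  case (step c x y)
  have "T (scaleF2 c x + y) = scaleF2 c (T x) + T y" by (simp only: T_add T_scale)
  moreover have "scaleF2 c (T x) + T y \<in> F.span (T ` B)"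
  proof (rule F.span_add[OF F.span_scale])
    show "T x \<in> F.span (T ` B)" using step(1) by (intro F.span_base) blast
    show "T y \<in> F.span (T ` B)" by (rule step(2))
  qed
  ultimately show ?case by (simp only:)
qed

lemma dim_T_le: assumes "finite X" shows "F.dim (T ` X) \<le> F.dim X"
proof -
  obtain B where B: "B \<subseteq> X" "F.independent B" "X \<subseteq> F.span B" "card B = F.dim X"
    using F.basis_exists by blast
  have fB: "finite B" using B assms finite_subset by blast
  have "T ` X \<subseteq> F.span (T ` B)" using B T_span by blast
  then have "F.dim (T ` X) \<le> card (T ` B)" using fB by (intro F.dim_le_card) auto
  also have "\<dots> \<le> card B" using fB card_image_le by blast
  finally show ?thesis using B by simp
qed

lemma dim_T: assumes "finite X" shows "F.dim (T ` X) = F.dim X"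
proof -
  have "T ` T ` X = X" by (simp add: image_image T_T)
  then have "F.dim X \<le> F.dim (T ` X)" using dim_T_le[of "T ` X"] assms by simp
  then show ?thesis using dim_T_le[OF assms] by simp
qed

lemma T_rowC: assumes x: "x \<in> W" shows "T (row A (W \<union> W2) x) = row A W x"
proof
  fix c
  show "T (row A (W \<union> W2) x) c = row A W x c"
  proof (cases "c \<in> W2")
    case True
    have cV: "c \<in> V" using True W2V by blast
    have "(\<Sum>y\<in>W. row A (W \<union> W2) x y * u c y) = (\<Sum>y\<in>W. u c y * adjmat A y x)"
      by (intro sum.cong) (auto simp: row_def sym mult.commute)
    then have "T (row A (W \<union> W2) x) c = adjmat A c x + (\<Sum>y\<in>W. u c y * adjmat A y x)"
      using True by (simp add: T_def row_def sym)
    also have "\<dots> = 0" using P[OF cV x] .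
    finally show ?thesis using True dW2 by (auto simp: row_def)
  next
    case False
    then show ?thesis by (simp add: T_def row_def)
  qed
qed

lemma T_g: assumes "r \<in> W1" shows "T (g r) = g r"
proof
  fix c
  have "(\<Sum>y\<in>W. g r y * u c y) = 0"
    using dW2 by (intro sum.neutral) (auto simp: g_def row_def)
  then show "T (g r) c = g r c" by (simp add: T_def)
qed

theorem main: "rankG \<Gamma> W1 W2 = rankG A (W \<union> W1) (W \<union> W2) - rankG A W W"
proof -
  let ?C = "W \<union> W2"
  have fW1: "finite W1" using W1V finV finite_subset by blast
  have "rankG A (W \<union> W1) ?C = F.dim (row A ?C ` (W \<union> W1))" by (rule rankG_row)
  also have "\<dots> = F.dim (F.span (row A ?C ` (W \<union> W1)))" by simp
  also have "\<dots> = F.dim (row A ?C ` W \<union> g ` W1)" by (simp only: span_eq1 F.dim_span)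
  also have "\<dots> = F.dim (T ` (row A ?C ` W \<union> g ` W1))" using finW fW1 by (simp add: dim_T)
  also have "T ` (row A ?C ` W \<union> g ` W1) = row A W ` W \<union> g ` W1"
    by (auto simp: image_Un image_image T_rowC T_g image_iff)
  also have "F.dim (row A W ` W \<union> g ` W1) = F.dim (row A W ` W) + F.dim (g ` W1)"
    using finW fW1 dW2 by (intro dim_disj[of _ _ W W2]) (auto simp: row_def g_def)
  also have "\<dots> = rankG A W W + rankG \<Gamma> W1 W2" by (simp add: rankG_row g_def)
  finally show ?thesis by simp
qed

end

theorem mainTheorem3:
  fixes V W W1 W2 :: "'v set" and A :: "'v \<Rightarrow> 'v \<Rightarrow> bool"
  assumes "is_graph V A"
    and "W \<subseteq> V"
    and "reducible V A W"
    and "W1 \<subseteq> V - W" and "W2 \<subseteq> V - W"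
  shows "rankG (graph_reduction V A W) W1 W2 = rankG A (W \<union> W1) (W \<union> W2) - rankG A W W"
proof -
  interpret red V A W W1 W2 using assms by unfold_locales
  show ?thesis by (rule main)
qed

end
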